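(* Under the Standing Setup (see context), Algorithm 1 is well defined: for every $k\ge0$, given $x^k\in B[\bar x,\beta]$ a point $z^k\in B(\bar x,\delta)$ as in step (a) exists. Moreover, for all $k\ge 0$, $$x^{k+1}=P_{\lambda_k}f(x^k)\quad\text{and}\quad x^k\in B[\bar x,\beta],$$ and $\sum_{k}\|x^k-x^{k+1}\|^2<\infty$.
   Context: $B(x,r)$, $B[x,r]$: open and closed Euclidean balls. For $\mu>0$: $e_\mu f(x):=\min_y\{f(y)+\frac{1}{2\mu}\|y-x\|^2\}$ (Moreau envelope), $P_\mu f(x):=\operatorname{argmin}_y\{f(y)+\frac{1}{2\mu}\|y-x\|^2\}$ (proximal operator). $\partial f$: limiting subdifferential. $f$ is $\rho$-weakly convex on $U$ if $f(\alpha x+(1-\alpha)y)\le \alpha f(x)+(1-\alpha)f(y)+\frac{\rho\alpha(1-\alpha)}{2}\|x-y\|^2$ for all $x,y\in U$, $\alpha\in[0,1]$. Standing Fact (cited): if $f$ is $\rho$-weakly convex on $\mathbb{R}^n$, $\rho>0$, $0\in\partial f(\bar x)$ and $\mu\in(0,1/\rho)$, there is $\alpha>0$ such that on $B[\bar x,\alpha]$, $P_\mu f$ is single-valued, $1/(1-\mu\rho)$-Lipschitz, equal to $(I+\mu\partial f)^{-1}$, and $e_\mu f$ is $C^1$ with $\nabla e_\mu f(x)=\mu^{-1}(x-P_\mu f(x))$. Standing Setup: $f:\mathbb{R}^n\to\mathbb{R}\cup\{+\infty\}$ is proper, lower semicontinuous, bounded below and $\rho$-weakly convex on $\mathbb{R}^n$,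 $\rho>0$; $\bar x\in\operatorname{dom}f$ with $0\in\partial f(\bar x)$. Fix $\bar\lambda>0$ and bounded sequences $\{\gamma_k\},\{\lambda_k\}$ with $0<\bar\lambda<2\gamma_k<\lambda_k<1/\rho$ for all $k$. Let $\delta>0$ be such that, for every $k$, the Standing Fact holds on $B[\bar x,\delta]$ (i.e. $\delta$ is smaller than the corresponding radius $\alpha$) for $\mu=\gamma_k$ and $\mu=\lambda_k$, and (Assumption 1) the Moreau envelopes $e_{\gamma_k}f$ and $e_{\lambda_k}f$ are convex on $B[\bar x,\delta]$. For each $k$ let $L_k:=1+\frac{\lambda_k-\gamma_k}{\gamma_k}\bigl(1+\frac{1}{1-\gamma_k\rho}\bigr)$, pick $\sigma_k\in(0,2/L_k^2)$, set $\kappa_k:=1-2\sigma_k+\sigma_k^2L_k^2$, and let $\beta>0$ satisfy $\beta<\min\{\delta,\frac{\delta}{\sigma_k}(1-\sqrt{\kappa_k})\}$ for all $k$. Algorithm 1: choose $x^0\in B[\bar x,\beta]$. Given $x^k\in B[\bar x,\beta]$: (a) compute $z^k\in B(\bar x,\delta)$ with $z^k=x^k-(\lambda_k-\gamma_k)\nabla e_{\gamma_k}f(z^k)$; (b) set $x^{k+1}=z^k-\gamma_k(\lambda_k-\gamma_k)^{-1}(x^k-z^k)$. *)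

theory Defs
  imports "HOL-Analysis.Analysis"
begin

text \<open>Extended-real-valued functions f on a Euclidean space; the value +\<infinity> encodes
  points outside the effective domain.\<close>

definition proper_fun :: "('a \<Rightarrow> ereal) \<Rightarrow> bool" where
  "proper_fun f \<longleftrightarrow> (\<forall>x. f x \<noteq> -\<infinity>) \<and> (\<exists>x. f x \<noteq> \<infinity>)"

definition lsc_fun :: "('a::topological_space \<Rightarrow> ereal) \<Rightarrow> bool" where
  "lsc_fun f \<longleftrightarrow> (\<forall>x X. X \<longlonglongrightarrow> x \<longrightarrow> f x \<le> liminf (\<lambda>n. f (X n)))"

definition bounded_below_fun :: "('a \<Rightarrow> ereal) \<Rightarrow> bool" where
  "bounded_below_fun f \<longleftrightarrow> (\<exists>m::real. \<forall>x. ereal m \<le> f x)"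

definition weakly_convex_on :: "real \<Rightarrow> 'a::real_normed_vector set \<Rightarrow> ('a \<Rightarrow> ereal) \<Rightarrow> bool" where
  "weakly_convex_on \<rho> U f \<longleftrightarrow>
     (\<forall>x\<in>U. \<forall>y\<in>U. \<forall>\<alpha>::real. 0 \<le> \<alpha> \<and> \<alpha> \<le> 1 \<longrightarrow>
        f (\<alpha> *\<^sub>R x + (1 - \<alpha>) *\<^sub>R y)
          \<le> ereal \<alpha> * f x + ereal (1 - \<alpha>) * f y + ereal (\<rho> * \<alpha> * (1 - \<alpha>) / 2 * (norm (x - y))\<^sup>2))"

definition frechet_subdiff :: "('a::real_inner \<Rightarrow> ereal) \<Rightarrow> 'a \<Rightarrow> 'a set" where
  "frechet_subdiff f x = {v. \<bar>f x\<bar> \<noteq> \<infinity> \<and>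
      (\<forall>\<epsilon>>0. \<exists>d>0. \<forall>y. norm (y - x) < d \<longrightarrow>
          ereal (real_of_ereal (f x) + inner v (y - x) - \<epsilon> * norm (y - x)) \<le> f y)}"

definition limiting_subdiff :: "('a::real_inner \<Rightarrow> ereal) \<Rightarrow> 'a \<Rightarrow> 'a set" where
  "limiting_subdiff f x = {v. \<exists>X V. X \<longlonglongrightarrow> x \<and> (\<lambda>n. f (X n)) \<longlonglongrightarrow> f x \<and> V \<longlonglongrightarrow> v \<and>
      (\<forall>n. V n \<in> frechet_subdiff f (X n))}"

definition moreau_env :: "real \<Rightarrow> ('a::real_normed_vector \<Rightarrow> ereal) \<Rightarrow> 'a \<Rightarrow> ereal" where
  "moreau_env \<mu> f x = (INF y. f y + ereal ((norm (y - x))\<^sup>2 / (2 * \<mu>)))"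

definition prox :: "real \<Rightarrow> ('a::real_normed_vector \<Rightarrow> ereal) \<Rightarrow> 'a \<Rightarrow> 'a set" where
  "prox \<mu> f x = {y. \<forall>y'. f y + ereal ((norm (y - x))\<^sup>2 / (2 * \<mu>))
                         \<le> f y' + ereal ((norm (y' - x))\<^sup>2 / (2 * \<mu>))}"

text \<open>Conclusions of the cited Standing Fact on the closed ball cball xb r for parameter mu.\<close>
definition standing_fact_on ::
  "('a::euclidean_space \<Rightarrow> ereal) \<Rightarrow> real \<Rightarrow> real \<Rightarrow> 'a \<Rightarrow> real \<Rightarrow> bool" where
  "standing_fact_on f \<rho> \<mu> xb r \<longleftrightarrow>
     (\<forall>x\<in>cball xb r. \<exists>p. prox \<mu> f x = {p}) \<and>
     (\<forall>x\<in>cball xb r. \<forall>y\<in>cball xb r.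
        dist (the_elem (prox \<mu> f x)) (the_elem (prox \<mu> f y)) \<le> (1 / (1 - \<mu> * \<rho>)) * dist x y) \<and>
     (\<forall>x\<in>cball xb r. prox \<mu> f x = {y. \<exists>v\<in>limiting_subdiff f y. x = y + \<mu> *\<^sub>R v}) \<and>
     (\<forall>x\<in>cball xb r. \<bar>moreau_env \<mu> f x\<bar> \<noteq> \<infinity> \<and>
        (GDERIV (\<lambda>u. real_of_ereal (moreau_env \<mu> f u)) x :> (1 / \<mu>) *\<^sub>R (x - the_elem (prox \<mu> f x)))) \<and>
     continuous_on (cball xb r) (\<lambda>x. (1 / \<mu>) *\<^sub>R (x - the_elem (prox \<mu> f x)))"

end

theory Submission
  imports Defs
begin



lemma grad_ineq:
  fixes g :: "'a::real_inner \<Rightarrow> real"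
  assumes cv: "convex_on S g" and S: "convex S" and x: "x\<in>S" and v: "v\<in>S"
    and gd: "GDERIV g x :> d"
  shows "g x + d \<bullet> (v - x) \<le> g v"
proof -
  define h where "h t = g (x + t *\<^sub>R (v - x))" for t :: real
  have lin: "((\<lambda>t::real. x + t *\<^sub>R (v - x)) has_derivative (\<lambda>t. t *\<^sub>R (v - x))) (at 0)"
    by (auto intro!: derivative_eq_intros)
  have gd': "(g has_derivative (\<lambda>h. h \<bullet> d)) (at (x + 0 *\<^sub>R (v - x)))"
    using gd by (simp add: gderiv_def)
  have "(h has_derivative (\<lambda>t. (t *\<^sub>R (v - x)) \<bullet> d)) (at 0)"
    unfolding h_def using has_derivative_compose[OF lin gd'] by (simp add: o_def)
  hence "(h has_real_derivative ((v - x) \<bullet> d)) (at 0)"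
  proof -
    have e: "(\<lambda>t::real. t * ((v - x) \<bullet> d)) = (*) ((v - x) \<bullet> d)" by (auto simp: mult.commute)
    show ?thesis using \<open>(h has_derivative _) _\<close> unfolding has_field_derivative_def by (simp add: e)
  qed
  hence lim: "((\<lambda>t. (h t - h 0) / (t - 0)) \<longlongrightarrow> (v - x) \<bullet> d) (at 0)"
    using DERIV_def[of h 0] by (simp add: DERIV_def)
  hence lim2: "((\<lambda>t. (h t - h 0) / t) \<longlongrightarrow> (v - x) \<bullet> d) (at_right 0)"
    by (simp add: filterlim_at_split)
  have ev: "\<forall>\<^sub>F t in at_right 0. (h t - h 0) / t \<le> g v - g x"
  proof -
    have "\<forall>\<^sub>F t in at_right (0::real). t \<in> {0<..<1}" by (rule eventually_at_right_real) simp
    then show ?thesis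
    proof eventually_elim
      case (elim t)
      have "x + t *\<^sub>R (v - x) = (1 - t) *\<^sub>R x + t *\<^sub>R v" by (simp add: algebra_simps)
      hence "h t \<le> (1 - t) * g x + t * g v"
        unfolding h_def using convex_onD[OF cv, of t x v] elim x v by simp
      hence "h t - h 0 \<le> t * (g v - g x)" by (simp add: h_def algebra_simps)
      thus ?case using elim by (simp add: divide_simps mult.commute)
    qed
  qed
  have "(v - x) \<bullet> d \<le> g v - g x"
    by (rule tendsto_le[OF trivial_limit_at_right_real tendsto_const lim2 ev])
  thus ?thesis by (simp add: inner_commute)
qed


lemma coco:
  fixes E :: "'a::real_inner \<Rightarrow> real" and P :: "'a \<Rightarrow> 'a"
  assumes low: "\<And>a b. a\<in>S \<Longrightarrow> b\<in>S \<Longrightarrow> E a + (a - P a) \<bullet> (b - a) \<le> E b"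
    and up: "\<And>a u. a\<in>S \<Longrightarrow> u\<in>S \<Longrightarrow> E u \<le> E a + (a - P a) \<bullet> (u - a) + (norm (u - a))\<^sup>2 / 2"
    and a: "a\<in>S" and b: "b\<in>S"
    and u: "b - ((b - P b) - (a - P a)) \<in> S" and u': "a - ((a - P a) - (b - P b)) \<in> S"
  shows "norm (P a - P b) \<le> norm (a - b)"
proof -
  define Wa where "Wa = a - P a"
  define Wb where "Wb = b - P b"
  define D where "D = Wb - Wa"
  have 1: "E a + Wa \<bullet> ((b - D) - a) \<le> E (b - D)" using low[OF a u] by (simp add: Wa_def Wb_def D_def)
  have 2: "E (b - D) \<le> E b + Wb \<bullet> ((b - D) - b) + (norm ((b - D) - b))\<^sup>2 / 2"
    using up[OF b u] by (simp add: Wa_def Wb_def D_def)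
  have 3: "E b + Wb \<bullet> ((a + D) - b) \<le> E (a + D)" using low[OF b, of "a + D"] u' by (simp add: Wa_def Wb_def D_def algebra_simps)
  have 4: "E (a + D) \<le> E a + Wa \<bullet> ((a + D) - a) + (norm ((a + D) - a))\<^sup>2 / 2"
    using up[OF a, of "a + D"] u' by (simp add: Wa_def Wb_def D_def algebra_simps)
  have n: "(norm D)\<^sup>2 = D \<bullet> D" by (simp add: power2_norm_eq_inner)
  have "D \<bullet> (b - a) \<ge> D \<bullet> D"
  proof -
    have "Wa \<bullet> ((b - D) - a) + Wb \<bullet> ((a + D) - b) \<le> Wa \<bullet> D - Wb \<bullet> D + D \<bullet> D"
      using 1 2 3 4 n by simp
    hence "(Wb - Wa) \<bullet> (a - b) + 2 * ((Wb - Wa) \<bullet> D) \<le> D \<bullet> D"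
      by (simp add: inner_diff_left inner_diff_right inner_add_right algebra_simps)
    thus ?thesis unfolding D_def by (simp add: inner_diff_left inner_diff_right inner_add_right inner_commute algebra_simps)
  qed
  moreover have eq: "P a - P b = (a - b) + D" by (simp add: Wa_def Wb_def D_def algebra_simps)
  moreover have "(norm (P a - P b))\<^sup>2 = (norm (a-b))\<^sup>2 + 2 * ((a - b) \<bullet> D) + D \<bullet> D"
    unfolding eq by (simp add: power2_norm_eq_inner inner_add_left inner_add_right inner_commute)
  moreover have "(a - b) \<bullet> D = -(D \<bullet> (b - a))" by (simp add: inner_commute inner_diff_left inner_diff_right)
  moreover have "D \<bullet> D \<ge> 0" by simp
  ultimately have "(norm (P a - P b))\<^sup>2 \<le> (norm (a - b))\<^sup>2" by linarith
  thus ?thesis by (rule power2_le_imp_le) simp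
qed

lemma chain:
  fixes P :: "'a::real_normed_vector \<Rightarrow> 'a"
  assumes eta: "\<eta> > 0"
    and loc: "\<And>a b. a \<in> cball c r \<Longrightarrow> b \<in> cball c r \<Longrightarrow> dist a b \<le> \<eta> \<Longrightarrow> dist (P a) (P b) \<le> dist a b"
    and x: "x \<in> cball c r"
  shows "dist (P x) (P c) \<le> dist x c"
proof -
  define N where "N = dist x c"
  obtain n :: nat where n: "N / \<eta> < n" using reals_Archimedean2 by blast
  have "0 \<le> N / \<eta>" using eta by (simp add: N_def)
  hence npos: "n > 0" using n by linarith
  define p where "p i = c + (real i / real n) *\<^sub>R (x - c)" for i
  have Nr: "N \<le> r" using x by (simp add: N_def dist_commute)
  have pin: "p i \<in> cball c r" if "i \<le> n" for i
  proof -
    have t1: "real i / real n \<le> 1" using that npos by simp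
    have "dist c (p i) = norm ((real i / real n) *\<^sub>R (x - c))"
      unfolding p_def dist_norm by (metis add_diff_cancel_left' norm_minus_commute)
    also have "\<dots> = (real i / real n) * N" by (simp add: N_def dist_norm)
    also have "\<dots> \<le> 1 * N" using t1 by (intro mult_right_mono) (auto simp: N_def)
    finally show ?thesis using Nr by simp
  qed
  have step: "dist (p (Suc i)) (p i) = N / n" for i
  proof -
    have "p (Suc i) - p i = (1 / real n) *\<^sub>R (x - c)"
      by (simp add: p_def add_divide_distrib scaleR_add_left)
    thus ?thesis by (simp add: dist_norm N_def)
  qed
  have stepeta: "N / n \<le> \<eta>" using n eta npos by (simp add: field_simps)
  have "i \<le> n \<Longrightarrow> dist (P (p i)) (P c) \<le> real i * (N / n)" for i
  proof (induction i)
    case 0 then show ?case by (simp add: p_def)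
  next
    case (Suc i)
    have le: "i \<le> n" using Suc.prems by simp
    have "dist (p (Suc i)) (p i) \<le> \<eta>" using step[of i] stepeta by simp
    from loc[OF pin[OF Suc.prems] pin[OF le] this]
    have s1: "dist (P (p (Suc i))) (P (p i)) \<le> N / n" using step[of i] by simp
    have s2: "dist (P (p i)) (P c) \<le> real i * (N / n)" using Suc.IH le by simp
    have "dist (P (p (Suc i))) (P c) \<le> dist (P (p (Suc i))) (P (p i)) + dist (P (p i)) (P c)"
      by (rule dist_triangle)
    also have "\<dots> \<le> N / n + real i * (N / n)" using s1 s2 by linarith
    also have "\<dots> = (real i + 1) * (N / n)" by (simp only: distrib_right mult_1 add.commute)
    also have "\<dots> = real (Suc i) * (N / n)" by simp
    finally show ?case .
  qed
  from this[of n] have "dist (P (p n)) (P c) \<le> real n * (N / n)" by simp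
  also have "real n * (N / n) = N" using npos by simp
  finally have "dist (P (p n)) (P c) \<le> N" .
  moreover have "real n / real n = 1" using npos by simp
  hence "p n = x" by (simp add: p_def)
  ultimately show ?thesis by (simp add: N_def)
qed

lemma prox_single:
  assumes "standing_fact_on f \<rho> \<mu> xb r" "x \<in> cball xb r"
  shows "prox \<mu> f x = {the_elem (prox \<mu> f x)}"
  using assms unfolding standing_fact_on_def by (metis the_elem_eq)

lemma prox_char:
  assumes "standing_fact_on f \<rho> \<mu> xb r" "x \<in> cball xb r"
  shows "prox \<mu> f x = {y. \<exists>v\<in>limiting_subdiff f y. x = y + \<mu> *\<^sub>R v}"
  using assms unfolding standing_fact_on_def by blast

lemma P_center:
  assumes sf: "standing_fact_on f \<rho> \<mu> xb r" and r: "r \<ge> 0" and crit: "0 \<in> limiting_subdiff f xb"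
  shows "the_elem (prox \<mu> f xb) = xb"
proof -
  have xin: "xb \<in> cball xb r" using r by simp
  have "xb \<in> prox \<mu> f xb" using prox_char[OF sf xin] crit by force
  thus ?thesis using prox_single[OF sf xin] by (metis singletonD)
qed

lemma env_at:
  assumes "p \<in> prox \<mu> f x"
  shows "moreau_env \<mu> f x = f p + ereal ((norm (p - x))\<^sup>2 / (2 * \<mu>))"
  unfolding moreau_env_def
proof (rule antisym)
  show "(INF y. f y + ereal ((norm (y - x))\<^sup>2 / (2 * \<mu>))) \<le> f p + ereal ((norm (p - x))\<^sup>2 / (2 * \<mu>))"
    by (rule INF_lower) simp
  show "f p + ereal ((norm (p - x))\<^sup>2 / (2 * \<mu>)) \<le> (INF y. f y + ereal ((norm (y - x))\<^sup>2 / (2 * \<mu>)))"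
    using assms unfolding prox_def by (auto intro: INF_greatest)
qed

lemma env_le: "moreau_env \<mu> f u \<le> f p + ereal ((norm (p - u))\<^sup>2 / (2 * \<mu>))"
  unfolding moreau_env_def by (rule INF_lower) simp


lemma gen_dist: "dist v (v - w) = norm (w::'a::real_normed_vector)"
  by (simp add: dist_norm)

lemma prox_nonexp:
  fixes f :: "'a::euclidean_space \<Rightarrow> ereal"
  assumes sf: "standing_fact_on f \<rho> \<mu> xb \<delta>"
    and cv: "convex_on (cball xb \<delta>) (\<lambda>x. real_of_ereal (moreau_env \<mu> f x))"
    and mu: "\<mu> > 0" "\<mu> * \<rho> < 1" and crit: "0 \<in> limiting_subdiff f xb"
    and beta: "0 < \<beta>" "\<beta> < \<delta>" and x: "x \<in> cball xb \<beta>"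
  shows "dist (the_elem (prox \<mu> f x)) xb \<le> dist x xb"
proof -
  define P where "P x = the_elem (prox \<mu> f x)" for x
  define e where "e x = real_of_ereal (moreau_env \<mu> f x)" for x
  define S where "S = cball xb \<delta>"
  define L where "L = 1 / (1 - \<mu> * \<rho>)"
  have Lpos: "L > 0" using mu by (simp add: L_def)
  have fg: "\<bar>moreau_env \<mu> f a\<bar> \<noteq> \<infinity> \<and> (GDERIV e a :> (1 / \<mu>) *\<^sub>R (a - P a))"
    if "a \<in> S" for a
  proof -
    have A4: "\<forall>x\<in>cball xb \<delta>. \<bar>moreau_env \<mu> f x\<bar> \<noteq> \<infinity> \<and> (GDERIV (\<lambda>u. real_of_ereal (moreau_env \<mu> f u)) x :> (1 / \<mu>) *\<^sub>R (x - the_elem (prox \<mu> f x)))"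
      using sf unfolding standing_fact_on_def by (elim conjE) assumption
    have "a \<in> cball xb \<delta>" using that by (simp add: S_def)
    from bspec[OF A4 this] show ?thesis unfolding P_def e_def .
  qed
  have fin: "\<bar>moreau_env \<mu> f a\<bar> \<noteq> \<infinity>" and gd: "GDERIV e a :> (1 / \<mu>) *\<^sub>R (a - P a)"
    if "a \<in> S" for a using fg[OF that] by auto
  have lip: "dist (P a) (P b) \<le> L * dist a b" if "a \<in> S" "b \<in> S" for a b
  proof -
    have A2: "\<forall>x\<in>cball xb \<delta>. \<forall>y\<in>cball xb \<delta>. dist (the_elem (prox \<mu> f x)) (the_elem (prox \<mu> f y)) \<le> (1 / (1 - \<mu> * \<rho>)) * dist x y"
      using sf unfolding standing_fact_on_def by (elim conjE) assumption
    show ?thesis using A2 that unfolding S_def P_def L_def by simp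
  qed
  have low: "\<mu> * e a + (a - P a) \<bullet> (b - a) \<le> \<mu> * e b" if "a \<in> S" "b \<in> S" for a b
  proof -
    have "e a + ((1 / \<mu>) *\<^sub>R (a - P a)) \<bullet> (b - a) \<le> e b"
      by (rule grad_ineq[OF cv[unfolded e_def[symmetric]]]) (use that gd[OF that(1)] in \<open>auto simp: S_def\<close>)
    hence "\<mu> * (e a + ((1 / \<mu>) *\<^sub>R (a - P a)) \<bullet> (b - a)) \<le> \<mu> * e b"
      using mu by (simp add: mult_left_mono)
    thus ?thesis using mu by (simp add: algebra_simps)
  qed
  have up: "\<mu> * e u \<le> \<mu> * e a + (a - P a) \<bullet> (u - a) + (norm (u - a))\<^sup>2 / 2" if "a \<in> S" "u \<in> S" for a u
  proof -
    have pa: "P a \<in> prox \<mu> f a" using prox_single[OF sf, of a] that by (auto simp: S_def P_def)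
    have ea: "moreau_env \<mu> f a = f (P a) + ereal ((norm (P a - a))\<^sup>2 / (2 * \<mu>))" by (rule env_at[OF pa])
    have fa: "\<bar>f (P a)\<bar> \<noteq> \<infinity>" using fin[OF that(1)] unfolding ea by auto
    then obtain c where c: "f (P a) = ereal c" by (cases "f (P a)") auto
    have ea': "e a = c + (norm (P a - a))\<^sup>2 / (2 * \<mu>)" unfolding e_def ea c by simp
    have "moreau_env \<mu> f u \<le> ereal (c + (norm (P a - u))\<^sup>2 / (2 * \<mu>))"
      using env_le[of \<mu> f u "P a"] c by simp
    moreover have "moreau_env \<mu> f u = ereal (e u)" using fin[OF that(2)] unfolding e_def
      by (simp add: ereal_real)
    ultimately have eu: "e u \<le> c + (norm (P a - u))\<^sup>2 / (2 * \<mu>)" by simp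
    have nq: "(norm (P a - u))\<^sup>2 = (norm (P a - a))\<^sup>2 + 2 * ((a - P a) \<bullet> (u - a)) + (norm (u - a))\<^sup>2"
    proof -
      have "P a - u = (P a - a) - (u - a)" by simp
      hence "(norm (P a - u))\<^sup>2 = (norm ((P a - a) - (u - a)))\<^sup>2" by simp
      also have "\<dots> = (norm (P a - a))\<^sup>2 - 2 * ((P a - a) \<bullet> (u - a)) + (norm (u - a))\<^sup>2"
        by (simp add: power2_norm_eq_inner inner_diff_left inner_diff_right inner_commute)
      also have "(P a - a) \<bullet> (u - a) = - ((a - P a) \<bullet> (u - a))" by (simp add: inner_diff_left)
      finally show ?thesis by simp
    qed
    have h1: "\<mu> * e u \<le> \<mu> * c + (norm (P a - u))\<^sup>2 / 2"
      using mult_left_mono[OF eu, of \<mu>] mu by (simp add: algebra_simps)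
    have h2: "\<mu> * e a = \<mu> * c + (norm (P a - a))\<^sup>2 / 2" using mu by (simp add: ea' algebra_simps)
    have h3: "(norm (P a - u))\<^sup>2 / 2 = (norm (P a - a))\<^sup>2 / 2 + (a - P a) \<bullet> (u - a) + (norm (u - a))\<^sup>2 / 2"
      using nq by simp
    show ?thesis using h1 h2 h3 by linarith
  qed
  define \<eta> where "\<eta> = (\<delta> - \<beta>) / (1 + L)"
  have eta: "\<eta> > 0" using beta Lpos by (simp add: \<eta>_def)
  have loc: "dist (P a) (P b) \<le> dist a b" if ab: "a \<in> cball xb \<beta>" "b \<in> cball xb \<beta>" "dist a b \<le> \<eta>" for a b
  proof -
    have aS: "a \<in> S" and bS: "b \<in> S" using ab beta by (auto simp: S_def)
    have key: "norm ((b - P b) - (a - P a)) \<le> \<delta> - \<beta>"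
    proof -
      have "norm ((b - P b) - (a - P a)) = norm ((b - a) - (P b - P a))" by (simp add: algebra_simps)
      also have "\<dots> \<le> norm (b - a) + norm (P b - P a)" by (rule norm_triangle_ineq4)
      also have "norm (P b - P a) \<le> L * norm (b - a)" using lip[OF bS aS] by (simp add: dist_norm)
      also have "norm (b - a) + L * norm (b - a) = (1 + L) * dist a b"
      proof -
        have "norm (b - a) = dist a b" by (metis dist_norm dist_commute)
        thus ?thesis by (simp add: algebra_simps)
      qed
      also have "\<dots> \<le> (1 + L) * \<eta>" using ab(3) Lpos by simp
      also have "\<dots> = \<delta> - \<beta>" using Lpos by (simp add: \<eta>_def)
      finally show ?thesis by simp
    qed
    have u: "b - ((b - P b) - (a - P a)) \<in> S"
    proof -
      have "dist xb (b - ((b - P b) - (a - P a))) \<le> dist xb b + dist b (b - ((b - P b) - (a - P a)))" by (rule dist_triangle)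
      moreover have "dist b (b - ((b - P b) - (a - P a))) = norm ((b - P b) - (a - P a))" by (rule gen_dist)
      ultimately have "dist xb (b - ((b - P b) - (a - P a))) \<le> dist xb b + norm ((b - P b) - (a - P a))" by simp
      thus ?thesis using key ab by (simp add: S_def)
    qed
    have u': "a - ((a - P a) - (b - P b)) \<in> S"
    proof -
      have "dist xb (a - ((a - P a) - (b - P b))) \<le> dist xb a + dist a (a - ((a - P a) - (b - P b)))" by (rule dist_triangle)
      moreover have "dist a (a - ((a - P a) - (b - P b))) = norm ((a - P a) - (b - P b))" by (rule gen_dist)
      ultimately have "dist xb (a - ((a - P a) - (b - P b))) \<le> dist xb a + norm ((a - P a) - (b - P b))" by simp
      moreover have "norm ((a - P a) - (b - P b)) = norm ((b - P b) - (a - P a))" by (rule norm_minus_commute)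
      ultimately show ?thesis using key ab by (simp add: S_def)
    qed
    define E where "E x = \<mu> * e x" for x
    have lowE: "E a + (a - P a) \<bullet> (b - a) \<le> E b" if "a\<in>S" "b\<in>S" for a b
      using low[OF that] by (simp add: E_def)
    have upE: "E u \<le> E a + (a - P a) \<bullet> (u - a) + (norm (u - a))\<^sup>2 / 2" if "a\<in>S" "u\<in>S" for a u
      using up[OF that] by (simp add: E_def)
    have "norm (P a - P b) \<le> norm (a - b)"
      by (rule coco[of S E P a b, OF lowE upE aS bS u u'])
    thus ?thesis by (simp add: dist_norm)
  qed
  have "dist (P x) (P xb) \<le> dist x xb" by (rule chain[OF eta loc x]) auto
  moreover have "P xb = xb" unfolding P_def by (rule P_center[OF sf _ crit]) (use beta in auto)
  ultimately show ?thesis by (simp add: P_def)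
qed


lemma contr:
  fixes F :: "'a::real_inner \<Rightarrow> 'a"
  assumes mono: "(z - w) \<bullet> (F z - F w) \<ge> (norm (z - w))\<^sup>2"
    and lipF: "norm (F z - F w) \<le> L * norm (z - w)" and sg: "\<sigma> > 0" and L: "L \<ge> 0"
  shows "norm ((z - \<sigma> *\<^sub>R (F z - x)) - (w - \<sigma> *\<^sub>R (F w - x))) \<le> sqrt (1 - 2 * \<sigma> + \<sigma>\<^sup>2 * L\<^sup>2) * norm (z - w)"
proof -
  define D where "D = z - w"
  define DF where "DF = F z - F w"
  have eq: "(z - \<sigma> *\<^sub>R (F z - x)) - (w - \<sigma> *\<^sub>R (F w - x)) = D - \<sigma> *\<^sub>R DF"
    by (simp add: D_def DF_def algebra_simps)
  have sq: "(norm (D - \<sigma> *\<^sub>R DF))\<^sup>2 = (norm D)\<^sup>2 - 2 * \<sigma> * (D \<bullet> DF) + \<sigma>\<^sup>2 * (norm DF)\<^sup>2"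
    unfolding power2_norm_eq_inner by (simp add: inner_diff_left inner_diff_right inner_commute power2_eq_square algebra_simps)
  have m: "D \<bullet> DF \<ge> (norm D)\<^sup>2" using mono by (simp add: D_def DF_def)
  have l2: "(norm DF)\<^sup>2 \<le> L\<^sup>2 * (norm D)\<^sup>2"
  proof -
    have "(norm DF)\<^sup>2 \<le> (L * norm D)\<^sup>2" using lipF by (intro power_mono) (auto simp: D_def DF_def)
    thus ?thesis by (simp add: power_mult_distrib)
  qed
  have "(norm (D - \<sigma> *\<^sub>R DF))\<^sup>2 \<le> (norm D)\<^sup>2 - 2 * \<sigma> * (norm D)\<^sup>2 + \<sigma>\<^sup>2 * (L\<^sup>2 * (norm D)\<^sup>2)"
  proof -
    have "2 * \<sigma> * (norm D)\<^sup>2 \<le> 2 * \<sigma> * (D \<bullet> DF)" using m sg by simp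
    moreover have "\<sigma>\<^sup>2 * (norm DF)\<^sup>2 \<le> \<sigma>\<^sup>2 * (L\<^sup>2 * (norm D)\<^sup>2)" using l2 by (simp add: mult_left_mono)
    ultimately show ?thesis unfolding sq by linarith
  qed
  also have "\<dots> = (1 - 2 * \<sigma> + \<sigma>\<^sup>2 * L\<^sup>2) * (norm D)\<^sup>2" by (simp add: algebra_simps)
  finally have h: "(norm (D - \<sigma> *\<^sub>R DF))\<^sup>2 \<le> (1 - 2 * \<sigma> + \<sigma>\<^sup>2 * L\<^sup>2) * (norm D)\<^sup>2" .
  have "norm (D - \<sigma> *\<^sub>R DF) = sqrt ((norm (D - \<sigma> *\<^sub>R DF))\<^sup>2)" by simp
  also have "\<dots> \<le> sqrt ((1 - 2 * \<sigma> + \<sigma>\<^sup>2 * L\<^sup>2) * (norm D)\<^sup>2)" using h by (rule real_sqrt_le_mono)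
  also have "\<dots> = sqrt (1 - 2 * \<sigma> + \<sigma>\<^sup>2 * L\<^sup>2) * norm D" by (simp add: real_sqrt_mult)
  finally show ?thesis unfolding eq by (simp add: D_def)
qed

lemma step_exists:
  fixes f :: "'a::euclidean_space \<Rightarrow> ereal"
  assumes sf: "standing_fact_on f \<rho> \<gamma> xb \<delta>"
    and cv: "convex_on (cball xb \<delta>) (\<lambda>x. real_of_ereal (moreau_env \<gamma> f x))"
    and gam: "\<gamma> > 0" "\<gamma> * \<rho> < 1" and T: "T > 0" and crit: "0 \<in> limiting_subdiff f xb"
    and sg: "0 < \<sigma>" "\<sigma> < 2 / (1 + T / \<gamma> * (1 + 1 / (1 - \<gamma> * \<rho>)))\<^sup>2"
    and beta: "0 < \<beta>" "\<beta> < \<delta>"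
      "\<beta> < \<delta> / \<sigma> * (1 - sqrt (1 - 2 * \<sigma> + \<sigma>\<^sup>2 * (1 + T / \<gamma> * (1 + 1 / (1 - \<gamma> * \<rho>)))\<^sup>2))"
    and x: "x \<in> cball xb \<beta>"
  shows "\<exists>z\<in>ball xb \<delta>. \<exists>g. (GDERIV (\<lambda>u. real_of_ereal (moreau_env \<gamma> f u)) z :> g) \<and> z = x - T *\<^sub>R g"
proof -
  define P where "P x = the_elem (prox \<gamma> f x)" for x
  define e where "e x = real_of_ereal (moreau_env \<gamma> f x)" for x
  define S where "S = cball xb \<delta>"
  define Lg where "Lg = 1 / (1 - \<gamma> * \<rho>)"
  define L where "L = 1 + T / \<gamma> * (1 + Lg)"
  define G where "G z = (1 / \<gamma>) *\<^sub>R (z - P z)" for z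
  define F where "F z = z + T *\<^sub>R G z" for z
  define \<kappa> where "\<kappa> = 1 - 2 * \<sigma> + \<sigma>\<^sup>2 * L\<^sup>2"
  define \<Phi> where "\<Phi> z = z - \<sigma> *\<^sub>R (F z - x)" for z
  have Lgpos: "Lg > 0" using gam by (simp add: Lg_def)
  have L1: "L \<ge> 1" using gam T Lgpos by (simp add: L_def)
  have gd: "GDERIV e a :> G a" if "a \<in> S" for a
  proof -
    have A4: "\<forall>x\<in>cball xb \<delta>. \<bar>moreau_env \<gamma> f x\<bar> \<noteq> \<infinity> \<and> (GDERIV (\<lambda>u. real_of_ereal (moreau_env \<gamma> f u)) x :> (1 / \<gamma>) *\<^sub>R (x - the_elem (prox \<gamma> f x)))"
      using sf unfolding standing_fact_on_def by (elim conjE) assumption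
    have "a \<in> cball xb \<delta>" using that by (simp add: S_def)
    from bspec[OF A4 this] show ?thesis unfolding P_def e_def G_def by simp
  qed
  have lip: "dist (P a) (P b) \<le> Lg * dist a b" if "a \<in> S" "b \<in> S" for a b
    using sf that unfolding standing_fact_on_def S_def P_def Lg_def by blast
  have low: "e a + G a \<bullet> (b - a) \<le> e b" if "a \<in> S" "b \<in> S" for a b
    by (rule grad_ineq[OF cv[unfolded e_def[symmetric]]]) (use that gd[OF that(1)] in \<open>auto simp: S_def\<close>)
  have monoF: "(z - w) \<bullet> (F z - F w) \<ge> (norm (z - w))\<^sup>2" if "z \<in> S" "w \<in> S" for z w
  proof -
    have "(G z - G w) \<bullet> (z - w) \<ge> 0"
    proof -
      have "e z + G z \<bullet> (w - z) \<le> e w" "e w + G w \<bullet> (z - w) \<le> e z" using low that by auto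
      moreover have "G z \<bullet> (w - z) = - (G z \<bullet> (z - w))" by (simp add: inner_diff_right)
      ultimately show ?thesis by (simp add: inner_diff_left)
    qed
    moreover have "(z - w) \<bullet> (F z - F w) = (norm (z - w))\<^sup>2 + T * ((G z - G w) \<bullet> (z - w))"
      by (simp add: F_def power2_norm_eq_inner inner_diff_left inner_diff_right inner_add_left inner_add_right inner_commute algebra_simps)
    ultimately show ?thesis using T by simp
  qed
  have lipF: "norm (F z - F w) \<le> L * norm (z - w)" if "z \<in> S" "w \<in> S" for z w
  proof -
    have "F z - F w = (z - w) + (T / \<gamma>) *\<^sub>R ((z - w) - (P z - P w))"
      by (simp add: F_def G_def algebra_simps)
    hence n0: "norm (F z - F w) \<le> norm (z - w) + norm ((T / \<gamma>) *\<^sub>R ((z - w) - (P z - P w)))"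
      by (metis norm_triangle_ineq)
    have n1: "norm ((T / \<gamma>) *\<^sub>R ((z - w) - (P z - P w))) = (T / \<gamma>) * norm ((z - w) - (P z - P w))"
      using T gam by simp
    have n2: "norm ((z - w) - (P z - P w)) \<le> norm (z - w) + Lg * norm (z - w)"
      using norm_triangle_ineq4[of "z - w" "P z - P w"] lip[OF that] by (simp add: dist_norm)
    have n3: "(T / \<gamma>) * norm ((z - w) - (P z - P w)) \<le> (T / \<gamma>) * (norm (z - w) + Lg * norm (z - w))"
      by (rule mult_left_mono[OF n2]) (use T gam in simp)
    have "norm (F z - F w) \<le> norm (z - w) + (T / \<gamma>) * (norm (z - w) + Lg * norm (z - w))"
      using n0 n1 n3 by linarith
    moreover have "L * norm (z - w) = norm (z - w) + (T / \<gamma>) * (norm (z - w) + Lg * norm (z - w))"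
      by (simp add: L_def algebra_simps add_divide_distrib)
    ultimately show ?thesis by linarith
  qed
  have contract: "dist (\<Phi> z) (\<Phi> w) \<le> sqrt \<kappa> * dist z w" if "z \<in> S" "w \<in> S" for z w
    using contr[OF monoF[OF that] lipF[OF that] sg(1), of x] L1 by (simp add: \<Phi>_def dist_norm \<kappa>_def)
  have Lsq: "L\<^sup>2 > 0" using L1 by simp
  have k0: "\<kappa> \<ge> 0"
  proof -
    have "\<sigma>\<^sup>2 * 1 \<le> \<sigma>\<^sup>2 * L\<^sup>2" using L1 by (intro mult_left_mono) (auto simp: power_one_over one_le_power)
    moreover have "(1 - \<sigma>)\<^sup>2 \<ge> 0" by simp
    ultimately show ?thesis by (simp add: \<kappa>_def power2_eq_square algebra_simps)
  qed
  have k1: "\<kappa> < 1"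
  proof -
    have "\<sigma> * L\<^sup>2 < 2" using sg(2) Lsq by (simp add: L_def Lg_def field_simps)
    hence "\<sigma> * (\<sigma> * L\<^sup>2) < \<sigma> * 2" using sg(1) by simp
    thus ?thesis by (simp add: \<kappa>_def power2_eq_square algebra_simps)
  qed
  have c0: "0 \<le> sqrt \<kappa>" and c1: "sqrt \<kappa> < 1" using k0 k1 by auto
  have Pxb: "P xb = xb" unfolding P_def by (rule P_center[OF sf _ crit]) (use beta in auto)
  have Fxb: "F xb = xb" by (simp add: F_def G_def Pxb)
  have xbS: "xb \<in> S" using beta by (simp add: S_def)
  have sb: "\<sigma> * \<beta> < \<delta> * (1 - sqrt \<kappa>)"
    using beta(3) sg(1) by (simp add: \<kappa>_def L_def Lg_def field_simps)
  have into: "\<Phi> z \<in> ball xb \<delta>" if "z \<in> S" for z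
  proof -
    have "dist xb (\<Phi> z) \<le> dist xb (\<Phi> xb) + dist (\<Phi> xb) (\<Phi> z)" by (rule dist_triangle)
    also have "dist xb (\<Phi> xb) = \<sigma> * dist x xb"
      using sg(1) norm_minus_commute[of xb x] by (simp add: \<Phi>_def Fxb dist_norm)
    also have "dist (\<Phi> xb) (\<Phi> z) \<le> sqrt \<kappa> * dist xb z" by (rule contract[OF xbS that])
    finally have "dist xb (\<Phi> z) \<le> \<sigma> * dist x xb + sqrt \<kappa> * dist xb z" by simp
    moreover have "\<sigma> * dist x xb \<le> \<sigma> * \<beta>" using x sg(1) by (simp add: dist_commute)
    moreover have "sqrt \<kappa> * dist xb z \<le> sqrt \<kappa> * \<delta>" using that c0 by (intro mult_left_mono) (auto simp: S_def)
    ultimately have "dist xb (\<Phi> z) \<le> \<sigma> * \<beta> + sqrt \<kappa> * \<delta>" by linarith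
    thus ?thesis using sb by (simp add: algebra_simps)
  qed
  have "\<exists>!z\<in>S. \<Phi> z = z"
  proof (rule Banach_fix[OF _ _ c0 c1])
    show "complete S" unfolding S_def by (simp add: complete_eq_closed)
    show "S \<noteq> {}" using xbS by auto
    show "\<Phi> ` S \<subseteq> S" using into by (fastforce simp: S_def intro: less_imp_le)
  qed (rule contract)
  then obtain z where zS: "z \<in> S" and fz: "\<Phi> z = z" by blast
  have zb: "z \<in> ball xb \<delta>" using into[OF zS] fz by simp
  have "\<sigma> *\<^sub>R (F z - x) = 0" using fz by (simp add: \<Phi>_def)
  hence "F z = x" using sg(1) by simp
  hence "z = x - T *\<^sub>R G z" by (simp add: F_def algebra_simps)
  moreover have "GDERIV (\<lambda>u. real_of_ereal (moreau_env \<gamma> f u)) z :> G z" using gd[OF zS] unfolding e_def[abs_def] .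
  ultimately show ?thesis using zb by blast
qed


lemma gderiv_unique:
  assumes "GDERIV h z :> g" "GDERIV h z :> g'"
  shows "g = g'"
proof -
  have "(\<lambda>v. v \<bullet> g) = (\<lambda>v. v \<bullet> g')"
    using has_derivative_unique assms unfolding gderiv_def by blast
  hence "(g - g') \<bullet> g = (g - g') \<bullet> g'" by metis
  hence "(g - g') \<bullet> (g - g') = 0" by (simp add: inner_diff_right)
  thus ?thesis by simp
qed

lemma prox_step:
  fixes f :: "'a::euclidean_space \<Rightarrow> ereal"
  assumes sfg: "standing_fact_on f \<rho> \<gamma> xb \<delta>" and sfl: "standing_fact_on f \<rho> lm xb \<delta>"
    and gam: "\<gamma> > 0" and T: "lm - \<gamma> \<noteq> 0"
    and x: "x \<in> cball xb \<delta>" and z: "z \<in> ball xb \<delta>"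
    and gd: "GDERIV (\<lambda>u. real_of_ereal (moreau_env \<gamma> f u)) z :> g"
    and zx: "z = x - (lm - \<gamma>) *\<^sub>R g"
    and x': "x' = z - (\<gamma> / (lm - \<gamma>)) *\<^sub>R (x - z)"
  shows "prox lm f x = {x'}"
proof -
  have zc: "z \<in> cball xb \<delta>" using z by auto
  define p where "p = the_elem (prox \<gamma> f z)"
  have A4: "\<forall>x\<in>cball xb \<delta>. \<bar>moreau_env \<gamma> f x\<bar> \<noteq> \<infinity> \<and> (GDERIV (\<lambda>u. real_of_ereal (moreau_env \<gamma> f u)) x :> (1 / \<gamma>) *\<^sub>R (x - the_elem (prox \<gamma> f x)))"
    using sfg unfolding standing_fact_on_def by (elim conjE) assumption
  have "GDERIV (\<lambda>u. real_of_ereal (moreau_env \<gamma> f u)) z :> (1 / \<gamma>) *\<^sub>R (z - p)"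
    using bspec[OF A4 zc] unfolding p_def by blast
  hence g: "g = (1 / \<gamma>) *\<^sub>R (z - p)" using gderiv_unique[OF gd] by blast
  hence gg: "\<gamma> *\<^sub>R g = z - p" using gam by simp
  have "x - z = (lm - \<gamma>) *\<^sub>R g" using zx by simp
  hence "x' = z - \<gamma> *\<^sub>R g" using T by (simp add: x')
  hence xp: "x' = p" using gg by simp
  have "p \<in> prox \<gamma> f z" using prox_single[OF sfg zc] unfolding p_def by auto
  then obtain v where v: "v \<in> limiting_subdiff f p" and zp: "z = p + \<gamma> *\<^sub>R v"
    using prox_char[OF sfg zc] by auto
  have "\<gamma> *\<^sub>R v = \<gamma> *\<^sub>R g" using zp gg by auto
  hence vg: "v = g" using gam by simp
  have "x = p + lm *\<^sub>R v"
  proof -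
    have "x = z + (lm - \<gamma>) *\<^sub>R g" using zx by simp
    also have "\<dots> = p + \<gamma> *\<^sub>R g + (lm - \<gamma>) *\<^sub>R g" using zp vg by simp
    also have "\<dots> = p + lm *\<^sub>R g" by (simp add: algebra_simps)
    finally show ?thesis using vg by simp
  qed
  hence "p \<in> prox lm f x" using prox_char[OF sfl x] v by auto
  moreover have "prox lm f x = {the_elem (prox lm f x)}" by (rule prox_single[OF sfl x])
  ultimately show ?thesis using xp by (metis singletonD)
qed

lemma summ:
  fixes f :: "'a::euclidean_space \<Rightarrow> ereal" and x :: "nat \<Rightarrow> 'a"
  assumes bdd: "bounded_below_fun f" and prp: "proper_fun f" and rho: "\<rho> > 0"
    and lam: "\<And>k. 0 < lam k \<and> lam k < 1 / \<rho>"
    and px: "\<And>k. prox (lam k) f (x k) = {x (Suc k)}" and xb: "f xb < \<infinity>"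
  shows "summable (\<lambda>k. (norm (x k - x (Suc k)))\<^sup>2)"
proof -
  obtain m :: real where m: "\<And>y. ereal m \<le> f y" using bdd unfolding bounded_below_fun_def by blast
  have ninf: "f y \<noteq> -\<infinity>" for y using prp unfolding proper_fun_def by blast
  have mem: "x (Suc k) \<in> prox (lam k) f (x k)" for k using px[of k] by simp
  have desc: "f (x (Suc k)) + ereal ((norm (x (Suc k) - x k))\<^sup>2 / (2 * lam k)) \<le> f (x k)" for k
  proof -
    have "\<forall>y'. f (x (Suc k)) + ereal ((norm (x (Suc k) - x k))\<^sup>2 / (2 * lam k)) \<le> f y' + ereal ((norm (y' - x k))\<^sup>2 / (2 * lam k))"
      using mem[of k] unfolding prox_def by simp
    from spec[OF this, of "x k"] show ?thesis by simp
  qed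
  have fin: "f (x (Suc k)) \<noteq> \<infinity>" for k
  proof
    assume inf: "f (x (Suc k)) = \<infinity>"
    have "\<forall>y'. f (x (Suc k)) + ereal ((norm (x (Suc k) - x k))\<^sup>2 / (2 * lam k)) \<le> f y' + ereal ((norm (y' - x k))\<^sup>2 / (2 * lam k))"
      using mem[of k] unfolding prox_def by simp
    from spec[OF this, of xb] inf have "f xb + ereal ((norm (xb - x k))\<^sup>2 / (2 * lam k)) = \<infinity>" by simp
    thus False using xb by (cases "f xb") auto
  qed
  define a where "a k = real_of_ereal (f (x (Suc k)))" for k
  have fa: "f (x (Suc k)) = ereal (a k)" for k
    using fin[of k] ninf[of "x (Suc k)"] unfolding a_def by (cases "f (x (Suc k))") auto
  have step: "a (Suc k) + (norm (x (Suc (Suc k)) - x (Suc k)))\<^sup>2 / (2 * lam (Suc k)) \<le> a k" for k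
    using desc[of "Suc k"] by (simp add: fa)
  have am: "m \<le> a k" for k using m[of "x (Suc k)"] by (simp add: fa)
  have nn: "0 \<le> (norm (x (Suc (Suc k)) - x (Suc k)))\<^sup>2 / (2 * lam (Suc k))" for k
    using lam[of "Suc k"] by simp
  have dec: "decseq a" by (rule decseq_SucI) (use step nn in \<open>smt (verit)\<close>)
  obtain Lim where "a \<longlonglongrightarrow> Lim" using decseq_convergent[OF dec, of m] am by blast
  hence sa: "summable (\<lambda>k. a k - a (Suc k))" by (rule telescope_summable')
  hence sa2: "summable (\<lambda>k. (2 / \<rho>) * (a k - a (Suc k)))" by (rule summable_mult)
  have bound: "norm ((norm (x (Suc k) - x (Suc (Suc k))))\<^sup>2) \<le> (2 / \<rho>) * (a k - a (Suc k))" for k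
  proof -
    define t where "t = (norm (x (Suc (Suc k)) - x (Suc k)))\<^sup>2"
    have lk: "0 < lam (Suc k)" "lam (Suc k) < 1 / \<rho>" using lam by auto
    have "t / (2 * lam (Suc k)) \<le> a k - a (Suc k)" using step[of k] unfolding t_def by simp
    hence "t \<le> 2 * lam (Suc k) * (a k - a (Suc k))" using lk by (simp add: field_simps)
    also have "\<dots> \<le> 2 * (1 / \<rho>) * (a k - a (Suc k))"
    proof -
      have dpos: "0 \<le> a k - a (Suc k)" using step[of k] nn[of k] by linarith
      show ?thesis using lk dpos by (intro mult_right_mono) auto
    qed
    finally have "t \<le> (2 / \<rho>) * (a k - a (Suc k))" by simp
    moreover have "norm ((norm (x (Suc k) - x (Suc (Suc k))))\<^sup>2) = t"
      unfolding t_def by (simp add: norm_minus_commute)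
    moreover have "0 \<le> t" by (simp add: t_def)
    ultimately show ?thesis by simp
  qed
  have "summable (\<lambda>k. (norm (x (Suc k) - x (Suc (Suc k))))\<^sup>2)"
    by (rule summable_comparison_test'[OF sa2, of 0]) (use bound in auto)
  thus ?thesis by (subst summable_Suc_iff[symmetric])
qed



theorem proposition4p1:
  fixes f :: "'a::euclidean_space \<Rightarrow> ereal"
    and \<rho> lamb \<delta> \<beta> :: real
    and xb :: 'a
    and gam lam sig :: "nat \<Rightarrow> real"
  assumes f_proper: "proper_fun f"
    and f_lsc: "lsc_fun f"
    and f_bdd: "bounded_below_fun f"
    and f_wc: "weakly_convex_on \<rho> UNIV f"
    and rho_pos: "\<rho> > 0"
    and xb_dom: "f xb < \<infinity>"
    and xb_crit: "0 \<in> limiting_subdiff f xb"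
    and lamb_pos: "lamb > 0"
    and bdd_gamma: "bounded (range gam)"
    and bdd_lambda: "bounded (range lam)"
    and params: "\<And>k. lamb < 2 * gam k \<and> 2 * gam k < lam k \<and> lam k < 1 / \<rho>"
    and delta_pos: "\<delta> > 0"
    and fact_gamma: "\<And>k. standing_fact_on f \<rho> (gam k) xb \<delta>"
    and fact_lambda: "\<And>k. standing_fact_on f \<rho> (lam k) xb \<delta>"
    and env_convex_gamma: "\<And>k. convex_on (cball xb \<delta>) (\<lambda>x. real_of_ereal (moreau_env (gam k) f x))"
    and env_convex_lambda: "\<And>k. convex_on (cball xb \<delta>) (\<lambda>x. real_of_ereal (moreau_env (lam k) f x))"
    and sigma: "\<And>k. 0 < sig k \<and>
        sig k < 2 / (1 + (lam k - gam k) / gam k * (1 + 1 / (1 - gam k * \<rho>)))\<^sup>2"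
    and beta_pos: "\<beta> > 0"
    and beta: "\<And>k. \<beta> < \<delta> \<and>
        \<beta> < \<delta> / sig k * (1 - sqrt (1 - 2 * sig k + (sig k)\<^sup>2 *
              (1 + (lam k - gam k) / gam k * (1 + 1 / (1 - gam k * \<rho>)))\<^sup>2))"
  shows "(\<forall>k. \<forall>x\<in>cball xb \<beta>. \<exists>z\<in>ball xb \<delta>. \<exists>g.
            (GDERIV (\<lambda>u. real_of_ereal (moreau_env (gam k) f u)) z :> g) \<and>
            z = x - (lam k - gam k) *\<^sub>R g)
       \<and> (\<forall>x z :: nat \<Rightarrow> 'a.
            x 0 \<in> cball xb \<beta> \<longrightarrow>
            (\<forall>k. x k \<in> cball xb \<beta> \<longrightarrow>
                 z k \<in> ball xb \<delta> \<and>
                 (\<exists>g. (GDERIV (\<lambda>u. real_of_ereal (moreau_env (gam k) f u)) (z k) :> g) \<and>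
                      z k = x k - (lam k - gam k) *\<^sub>R g) \<and>
                 x (Suc k) = z k - (gam k / (lam k - gam k)) *\<^sub>R (x k - z k)) \<longrightarrow>
            (\<forall>k. prox (lam k) f (x k) = {x (Suc k)} \<and> x k \<in> cball xb \<beta>) \<and>
            summable (\<lambda>k. (norm (x k - x (Suc k)))\<^sup>2))"
proof -
  have gpos: "0 < gam k" for k using params[of k] lamb_pos by linarith
  have Tpos: "0 < lam k - gam k" for k using params[of k] gpos[of k] by linarith
  have lpos: "0 < lam k" for k using Tpos[of k] gpos[of k] by linarith
  have lrho: "lam k * \<rho> < 1" for k using params[of k] rho_pos by (simp add: field_simps)
  have grho: "gam k * \<rho> < 1" for k
  proof -
    have "gam k * \<rho> \<le> lam k * \<rho>" using Tpos[of k] rho_pos by (intro mult_right_mono) auto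
    thus ?thesis using lrho[of k] by linarith
  qed
  have part1: "\<forall>k. \<forall>x\<in>cball xb \<beta>. \<exists>z\<in>ball xb \<delta>. \<exists>g.
            (GDERIV (\<lambda>u. real_of_ereal (moreau_env (gam k) f u)) z :> g) \<and>
            z = x - (lam k - gam k) *\<^sub>R g"
  proof (intro allI ballI)
    fix k x assume x: "x \<in> cball xb \<beta>"
    show "\<exists>z\<in>ball xb \<delta>. \<exists>g. (GDERIV (\<lambda>u. real_of_ereal (moreau_env (gam k) f u)) z :> g) \<and>
            z = x - (lam k - gam k) *\<^sub>R g"
      by (rule step_exists[OF fact_gamma env_convex_gamma gpos grho Tpos xb_crit
            conjunct1[OF sigma] conjunct2[OF sigma] beta_pos conjunct1[OF beta] conjunct2[OF beta] x])
  qed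
  have part2: "(\<forall>k. prox (lam k) f (x k) = {x (Suc k)} \<and> x k \<in> cball xb \<beta>) \<and>
            summable (\<lambda>k. (norm (x k - x (Suc k)))\<^sup>2)"
    if x0: "x 0 \<in> cball xb \<beta>"
      and hyp: "\<forall>k. x k \<in> cball xb \<beta> \<longrightarrow>
                 z k \<in> ball xb \<delta> \<and>
                 (\<exists>g. (GDERIV (\<lambda>u. real_of_ereal (moreau_env (gam k) f u)) (z k) :> g) \<and>
                      z k = x k - (lam k - gam k) *\<^sub>R g) \<and>
                 x (Suc k) = z k - (gam k / (lam k - gam k)) *\<^sub>R (x k - z k)"
    for x z :: "nat \<Rightarrow> 'a"
  proof -
    have pstep: "prox (lam k) f (x k) = {x (Suc k)}" if xk: "x k \<in> cball xb \<beta>" for k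
    proof -
      have h: "z k \<in> ball xb \<delta>" "\<exists>g. (GDERIV (\<lambda>u. real_of_ereal (moreau_env (gam k) f u)) (z k) :> g) \<and>
                      z k = x k - (lam k - gam k) *\<^sub>R g"
          "x (Suc k) = z k - (gam k / (lam k - gam k)) *\<^sub>R (x k - z k)"
        using hyp xk by blast+
      then obtain g where g: "GDERIV (\<lambda>u. real_of_ereal (moreau_env (gam k) f u)) (z k) :> g"
        "z k = x k - (lam k - gam k) *\<^sub>R g" by blast
      have xkd: "x k \<in> cball xb \<delta>" using xk beta[of k] by auto
      show ?thesis
        by (rule prox_step[OF fact_gamma fact_lambda gpos _ xkd h(1) g h(3)]) (use Tpos[of k] in simp)
    qed
    have inb: "x k \<in> cball xb \<beta>" for k
    proof (induction k)
      case 0 show ?case by (rule x0)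
    next
      case (Suc k)
      have "dist (the_elem (prox (lam k) f (x k))) xb \<le> dist (x k) xb"
        by (rule prox_nonexp[OF fact_lambda env_convex_lambda lpos lrho xb_crit beta_pos conjunct1[OF beta] Suc])
      hence "dist (x (Suc k)) xb \<le> dist (x k) xb" using pstep[OF Suc] by simp
      thus ?case using Suc by (simp add: dist_commute)
    qed
    have all: "\<And>k. prox (lam k) f (x k) = {x (Suc k)}" using pstep inb by blast
    have "summable (\<lambda>k. (norm (x k - x (Suc k)))\<^sup>2)"
    proof -
      have lamk: "\<And>k. 0 < lam k \<and> lam k < 1 / \<rho>" using lpos params by blast
      show ?thesis by (rule summ[where lam = lam and x = x, OF f_bdd f_proper rho_pos lamk all xb_dom])
    qed
    thus ?thesis using all inb by blast
  qed
  show ?thesis using part1 part2 by blast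
qed

end
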